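(* Let $\{x,y\}$ be Cartesian coordinates on $\mathbb{E}^2$, $z=\frac12(x-iy)$, $\bar z=\frac12(x+iy)$, and let $\xi=\xi_{\{\mu\}}$ be a GCKV with parameters $\mu=(\mu_0,\mu_1,\mu_2)\in\mathbb{C}^3$. Let $\gamma,\delta\in\mathbb{C}$ be any pair with $\frac12\delta^2\mu_2-\gamma\delta\mu_1+\gamma^2\mu_0=1$ and set $\alpha=\frac12(\delta\mu_2-\gamma\mu_1)$, $\beta=\frac12\delta\mu_1-\gamma\mu_0$. Then: (i) In the coordinate system $\{\omega,\bar\omega\}$ defined by $\omega=(\alpha z+\beta)/(\gamma z+\delta)$, $\xi$ takes the canonical form $\xi=(\mu_0'+\omega^2)\partial_\omega+(\bar\mu_0'+\bar\omega^2)\partial_{\bar\omega}$, where $4\mu_0':=2\mu_0\mu_2-\mu_1^2$. (ii) Any other coordinate system $\{\omega',\bar\omega'\}$ (obtained from $\omega$ by a Möbius coordinate change) in which $\xi$ is in canonical form is related to $\{\omega,\bar\omega\}$ by $\omega'=(\delta'\omega-\gamma'\mu_0')/(\gamma'\omega+\delta')$ with $\delta'^2+\mu_0'\gamma'^2=1$. (iii) Write $4\mu_0'=Qe^{-2i\theta}$ with $Q\ge0$, $\theta\in[0,\pi)$ ($\theta$ arbitrary if $Q=0$). Define the complex coordinate $\zeta:=\frac12(v_1+iv_2)$ by $$\omega=\frac{i\sqrt Q\,e^{-i\theta}}{2}\,\frac{1+e^{2i\sqrt Q e^{-i\theta}\zeta}}{1-e^{2i\sqrt Q e^{-i\theta}\zeta}}\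 \ (Q>0),\qquad \omega=-\frac{1}{2\zeta}\ \ (Q=0).$$ Then the (locally defined) real coordinates $\{v_1,v_2\}$ are adapted to $\xi$ and to $\xi^\perp:=\xi_{\{i\mu\}}$, namely $\xi=\partial_{v_1}$ and $\xi^\perp=\partial_{v_2}$. (iv) For $u=(u_0,u_1,u_2,u_3)\in\mathbb{R}^4\setminus\{0\}$, the metric $g_u:=\Omega_u^{-2}(dx^2+dy^2)$, $\Omega_u:=u_0(1+z\bar z)+u_1(1-z\bar z)+u_2(z+\bar z)+u_3\,i(z-\bar z)$, takes in the coordinates $\{v_1,v_2\}$ the form $$g_u=\frac{dv_1^2+dv_2^2}{\big((u_0'-u_1')f_++(u_0'+u_1')f_-+u_2'f_2+u_3'f_3\big)^2},$$ where $u'=(u_0',u_1',u_2',u_3')^T:=\Lambda\,(u_0,u_1,u_2,u_3)^T$ and $\Lambda$, $f_\pm,f_2,f_3$ are as in the context.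
   Context: A GCKV with parameters $\mu\in\mathbb{C}^3$ is $\xi_{\{\mu\}}=(\mu_0+\mu_1z+\frac12\mu_2z^2)\partial_z+(\bar\mu_0+\bar\mu_1\bar z+\frac12\bar\mu_2\bar z^2)\partial_{\bar z}$ (the conformal Killing vectors of $dx^2+dy^2$ that extend smoothly to the Riemann sphere); in a complex coordinate $w$, $\xi$ is in canonical form if it reads $(c+w^2)\partial_w+(\bar c+\bar w^2)\partial_{\bar w}$ for some $c\in\mathbb{C}$. Functions: $h_1:=v_1\cos\theta+v_2\sin\theta$, $h_2:=v_2\cos\theta-v_1\sin\theta$; for $Q>0$: $f_+=\frac14(\cosh(\sqrt Q h_2)+\cos(\sqrt Q h_1))$, $f_-=\frac1Q(\cosh(\sqrt Q h_2)-\cos(\sqrt Q h_1))$, $f_2=\frac1{\sqrt Q}(\sin\theta\sinh(\sqrt Q h_2)-\cos\theta\sin(\sqrt Q h_1))$, $f_3=-\frac1{\sqrt Q}(\cos\theta\sinh(\sqrt Q h_2)+\sin\theta\sin(\sqrt Q h_1))$; for $Q=0$: $f_+=\frac12$, $f_-=\frac12(v_1^2+v_2^2)$, $f_2=-v_1$, $f_3=-v_2$. $\Lambda=\frac12 N$ with the rows of $N$: row 0: $\big(\alpha\bar\alpha+\beta\bar\beta+\gamma\bar\gamma+\delta\bar\delta,\ \alpha\bar\alpha-\beta\bar\beta+\gamma\bar\gamma-\delta\bar\delta,\ -\alpha\bar\beta-\beta\bar\alpha-\gamma\bar\delta-\delta\bar\gamma,\ i(\alpha\bar\beta-\beta\bar\alpha+\gamma\bar\delta-\delta\bar\gamma)\big)$;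 row 1: $\big(\alpha\bar\alpha+\beta\bar\beta-\gamma\bar\gamma-\delta\bar\delta,\ \alpha\bar\alpha-\beta\bar\beta-\gamma\bar\gamma+\delta\bar\delta,\ -\alpha\bar\beta-\beta\bar\alpha+\gamma\bar\delta+\delta\bar\gamma,\ i(\alpha\bar\beta-\beta\bar\alpha-\gamma\bar\delta+\delta\bar\gamma)\big)$; row 2: $\big(-(\alpha\bar\gamma+\beta\bar\delta+\gamma\bar\alpha+\delta\bar\beta),\ -\alpha\bar\gamma+\beta\bar\delta-\gamma\bar\alpha+\delta\bar\beta,\ \alpha\bar\delta+\beta\bar\gamma+\gamma\bar\beta+\delta\bar\alpha,\ i(-\alpha\bar\delta+\beta\bar\gamma-\gamma\bar\beta+\delta\bar\alpha)\big)$; row 3: $\big(i(-\alpha\bar\gamma-\beta\bar\delta+\gamma\bar\alpha+\delta\bar\beta),\ i(-\alpha\bar\gamma+\beta\bar\delta+\gamma\bar\alpha-\delta\bar\beta),\ i(\alpha\bar\delta+\beta\bar\gamma-\gamma\bar\beta-\delta\bar\alpha),\ \alpha\bar\delta-\beta\bar\gamma-\gamma\bar\beta+\delta\bar\alpha\big)$. *)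

theory Defs
  imports "HOL-Analysis.Analysis"
begin

text \<open>The holomorphic (\<partial>_z) component of the GCKV with parameters (mu0,mu1,mu2)
  in the complex coordinate z; the \<partial>_zbar component is its complex conjugate.\<close>
definition gckv :: "complex \<Rightarrow> complex \<Rightarrow> complex \<Rightarrow> complex \<Rightarrow> complex" where
  "gckv m0 m1 m2 z = m0 + m1 * z + m2 * z^2 / 2"

definition mob :: "complex \<Rightarrow> complex \<Rightarrow> complex \<Rightarrow> complex \<Rightarrow> complex \<Rightarrow> complex" where
  "mob a b c d w = (a * w + b) / (c * w + d)"

text \<open>A vector field with holomorphic component V (in the old coordinate) reads
  W(w') \<partial>_w' + conj in the new holomorphic coordinate w' = phi(old) on S:
  its new component is V times phi', expressed as a function of the new coordinate.\<close>
definition reads_as :: "(complex \<Rightarrow> complex) \<Rightarrow> (complex \<Rightarrow> complex) \<Rightarrow> (complex \<Rightarrow> complex)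
    \<Rightarrow> complex set \<Rightarrow> bool" where
  "reads_as V phi W S \<longleftrightarrow>
     (\<forall>z\<in>S. \<exists>d. (phi has_field_derivative d) (at z) \<and> V z * d = W (phi z))"

definition canonical_in :: "(complex \<Rightarrow> complex) \<Rightarrow> (complex \<Rightarrow> complex) \<Rightarrow> complex set
    \<Rightarrow> complex \<Rightarrow> bool" where
  "canonical_in V phi S c \<longleftrightarrow> reads_as V phi (\<lambda>w. c + w^2) S"

definition omega_of_zeta :: "real \<Rightarrow> real \<Rightarrow> complex \<Rightarrow> complex" where
  "omega_of_zeta Q th zeta =
     (if Q > 0 then
        (\<i> * of_real (sqrt Q) * exp (- \<i> * of_real th) / 2) *
        (1 + exp (2 * \<i> * of_real (sqrt Q) * exp (- \<i> * of_real th) * zeta)) /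
        (1 - exp (2 * \<i> * of_real (sqrt Q) * exp (- \<i> * of_real th) * zeta))
      else - 1 / (2 * zeta))"

definition zeta_ok :: "real \<Rightarrow> real \<Rightarrow> complex \<Rightarrow> bool" where
  "zeta_ok Q th zeta =
     (if Q > 0 then 1 - exp (2 * \<i> * of_real (sqrt Q) * exp (- \<i> * of_real th) * zeta) \<noteq> 0
      else zeta \<noteq> 0)"

definition Omega :: "real \<Rightarrow> real \<Rightarrow> real \<Rightarrow> real \<Rightarrow> complex \<Rightarrow> complex" where
  "Omega u0 u1 u2 u3 z = of_real u0 * (1 + z * cnj z) + of_real u1 * (1 - z * cnj z)
     + of_real u2 * (z + cnj z) + of_real u3 * \<i> * (z - cnj z)"

text \<open>The point (x,y) as x + i y, given z = (x - i y)/2.\<close>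
definition xy_of_z :: "complex \<Rightarrow> complex" where
  "xy_of_z z = 2 * cnj z"

definition h1 :: "real \<Rightarrow> real \<Rightarrow> real \<Rightarrow> real" where
  "h1 th v1 v2 = v1 * cos th + v2 * sin th"
definition h2 :: "real \<Rightarrow> real \<Rightarrow> real \<Rightarrow> real" where
  "h2 th v1 v2 = v2 * cos th - v1 * sin th"

definition fplus :: "real \<Rightarrow> real \<Rightarrow> real \<Rightarrow> real \<Rightarrow> real" where
  "fplus Q th v1 v2 = (if Q > 0 then
     (cosh (sqrt Q * h2 th v1 v2) + cos (sqrt Q * h1 th v1 v2)) / 4 else 1/2)"
definition fminus :: "real \<Rightarrow> real \<Rightarrow> real \<Rightarrow> real \<Rightarrow> real" where
  "fminus Q th v1 v2 = (if Q > 0 then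
     (cosh (sqrt Q * h2 th v1 v2) - cos (sqrt Q * h1 th v1 v2)) / Q else (v1^2 + v2^2) / 2)"
definition f2 :: "real \<Rightarrow> real \<Rightarrow> real \<Rightarrow> real \<Rightarrow> real" where
  "f2 Q th v1 v2 = (if Q > 0 then
     (sin th * sinh (sqrt Q * h2 th v1 v2) - cos th * sin (sqrt Q * h1 th v1 v2)) / sqrt Q
     else - v1)"
definition f3 :: "real \<Rightarrow> real \<Rightarrow> real \<Rightarrow> real \<Rightarrow> real" where
  "f3 Q th v1 v2 = (if Q > 0 then
     - (cos th * sinh (sqrt Q * h2 th v1 v2) + sin th * sin (sqrt Q * h1 th v1 v2)) / sqrt Q
     else - v2)"

definition Nmat :: "complex \<Rightarrow> complex \<Rightarrow> complex \<Rightarrow> complex \<Rightarrow> nat \<Rightarrow> nat \<Rightarrow> complex" where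
  "Nmat a b g d i j =
    (let A = a; B = b; G = g; D = d; cA = cnj a; cB = cnj b; cG = cnj g; cD = cnj d in
     [[A*cA + B*cB + G*cG + D*cD, A*cA - B*cB + G*cG - D*cD,
       - A*cB - B*cA - G*cD - D*cG, \<i> * (A*cB - B*cA + G*cD - D*cG)],
      [A*cA + B*cB - G*cG - D*cD, A*cA - B*cB - G*cG + D*cD,
       - A*cB - B*cA + G*cD + D*cG, \<i> * (A*cB - B*cA - G*cD + D*cG)],
      [- (A*cG + B*cD + G*cA + D*cB), - A*cG + B*cD - G*cA + D*cB,
       A*cD + B*cG + G*cB + D*cA, \<i> * (- A*cD + B*cG - G*cB + D*cA)],
      [\<i> * (- A*cG - B*cD + G*cA + D*cB), \<i> * (- A*cG + B*cD + G*cA - D*cB),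
       \<i> * (A*cD + B*cG - G*cB - D*cA), A*cD - B*cG - G*cB + D*cA]] ! i ! j)"

definition Lam :: "complex \<Rightarrow> complex \<Rightarrow> complex \<Rightarrow> complex \<Rightarrow> nat \<Rightarrow> nat \<Rightarrow> complex" where
  "Lam a b g d i j = Nmat a b g d i j / 2"

end

theory Submission
  imports Defs
begin

lemma V_frac: fixes N p m0 m1 m2 :: complex assumes "p \<noteq> 0"
  shows "gckv m0 m1 m2 (N / p) = (m0 * p^2 + m1 * N * p + m2 * N^2 / 2) / p^2"
  unfolding gckv_def using assms by (simp add: field_simps power2_eq_square)

lemma gckv_mob_inv:
  fixes mu0 mu1 mu2 gam del w :: complex
  assumes norm: "del^2 * mu2 / 2 - gam * del * mu1 + gam^2 * mu0 = 1"
  and p: "(del * mu2 - gam * mu1) / 2 - gam * w \<noteq> 0"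
  shows "gckv mu0 mu1 mu2 (mob del (- (del * mu1 / 2 - gam * mu0)) (- gam) ((del * mu2 - gam * mu1) / 2) w)
     = ((2 * mu0 * mu2 - mu1^2) / 4 + w^2) / ((del * mu2 - gam * mu1) / 2 - gam * w)^2"
proof -
  have key: "mu0 * ((del * mu2 - gam * mu1) / 2 - gam * w)^2 + mu1 * (del * w - (del * mu1 / 2 - gam * mu0)) * ((del * mu2 - gam * mu1) / 2 - gam * w) + mu2 * (del * w - (del * mu1 / 2 - gam * mu0))^2 / 2
     = (del^2 * mu2 / 2 - gam * del * mu1 + gam^2 * mu0) * ((2 * mu0 * mu2 - mu1^2) / 4 + w^2)"
    by (simp add: field_simps power2_eq_square)
  have "mob del (- (del * mu1 / 2 - gam * mu0)) (- gam) ((del * mu2 - gam * mu1) / 2) w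
     = (del * w - (del * mu1 / 2 - gam * mu0)) / ((del * mu2 - gam * mu1) / 2 - gam * w)"
    unfolding mob_def by (simp add: algebra_simps)
  then show ?thesis using V_frac[OF p, of mu0 mu1 mu2] key norm by simp
qed

lemma mob_deriv:
  fixes a b c d z :: complex
  assumes "c * z + d \<noteq> 0"
  shows "(mob a b c d has_field_derivative (a * d - b * c) / (c * z + d)^2) (at z)"
  unfolding mob_def using assms
  by (auto intro!: derivative_eq_intros simp: field_simps power2_eq_square)

lemma part1:
  fixes mu0 mu1 mu2 gam del z :: complex
  assumes norm: "del^2 * mu2 / 2 - gam * del * mu1 + gam^2 * mu0 = 1"
  and q: "gam * z + del \<noteq> 0"
  shows "gckv mu0 mu1 mu2 z * (1 / (gam * z + del)^2) = (2 * mu0 * mu2 - mu1^2) / 4 +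
     (mob ((del * mu2 - gam * mu1) / 2) (del * mu1 / 2 - gam * mu0) gam del z)^2"
proof -
  have key: "(del^2 * mu2 / 2 - gam * del * mu1 + gam^2 * mu0) * (mu0 + mu1 * z + mu2 * z^2 / 2) = ((2 * mu0 * mu2 - mu1^2) / 4 * (gam * z + del)^2 + ((del * mu2 - gam * mu1) / 2 * z + (del * mu1 / 2 - gam * mu0))^2)"
    by (simp add: field_simps power2_eq_square)
  have gen: "\<And>m A q::complex. q \<noteq> 0 \<Longrightarrow> (m * q^2 + A^2) * (1/q^2) = m + (A/q)^2"
    by (simp add: field_simps power2_eq_square)
  define m where "m = (2 * mu0 * mu2 - mu1^2) / 4"
  define A where "A = (del * mu2 - gam * mu1) / 2 * z + (del * mu1 / 2 - gam * mu0)"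
  define qq where "qq = gam * z + del"
  have "gckv mu0 mu1 mu2 z = m * qq^2 + A^2" using key norm unfolding gckv_def m_def A_def qq_def by simp
  moreover have "mob ((del * mu2 - gam * mu1) / 2) (del * mu1 / 2 - gam * mu0) gam del z = A / qq"
    unfolding mob_def A_def qq_def by simp
  ultimately show ?thesis using gen[of qq m A] q unfolding m_def qq_def by simp
qed

lemma l1: fixes q X Dl c' N :: complex assumes w: "q \<noteq> 0"
  and "X * (Dl / q^2) = c' + (N / q)^2"
  shows "X * Dl = c' * q^2 + N^2"
proof -
  have "X * Dl = (X * (Dl / q^2)) * q^2" using w by simp
  also have "\<dots> = (c' + (N / q)^2) * q^2" using assms by simp
  also have "\<dots> = c' * q^2 + N^2" using w by (simp add: power_divide distrib_right)
  finally show ?thesis .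
qed
lemma quad_zero:
  fixes A B C w0 :: complex
  assumes "\<And>t. t \<in> {1, -1, 2} \<Longrightarrow> A * (w0 + t)^2 + B * (w0 + t) + C = 0"
  shows "A = 0 \<and> B = 0 \<and> C = 0"
proof -
  have e1: "A * (w0 + 1)^2 + B * (w0 + 1) + C = 0" using assms by auto
  have e2: "A * (w0 + -1)^2 + B * (w0 + -1) + C = 0" using assms[of "-1"] by simp
  have e3: "A * (w0 + 2)^2 + B * (w0 + 2) + C = 0" using assms by auto
  have f1: "4 * A * w0 + 2 * B = 0"
  proof -
    have "(A * (w0 + 1)^2 + B * (w0 + 1) + C) - (A * (w0 + -1)^2 + B * (w0 + -1) + C) = 4 * A * w0 + 2 * B"
      by (simp add: power2_eq_square algebra_simps)
    then show ?thesis by (simp only: e1 e2 diff_zero)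
  qed
  have f2: "A * (2 * w0 + 3) + B = 0"
  proof -
    have "(A * (w0 + 2)^2 + B * (w0 + 2) + C) - (A * (w0 + 1)^2 + B * (w0 + 1) + C) = A * (2 * w0 + 3) + B"
      by (simp add: power2_eq_square algebra_simps)
    then show ?thesis by (simp only: e1 e3 diff_zero)
  qed
  have "3 * A = 0"
  proof -
    have "3 * A = (A * (2 * w0 + 3) + B) - (4 * A * w0 + 2 * B) / 2" by (simp add: algebra_simps)
    then show ?thesis using f1 f2 by simp
  qed
  then have A: "A = 0" by simp
  then have "B = 0" using f2 by simp
  moreover have "C = 0" using e1 A \<open>B = 0\<close> by simp
  ultimately show ?thesis using A by simp
qed

lemma part2:
  fixes a b c d c' m :: complex
  assumes D: "a * d - b * c \<noteq> 0"
  and can: "canonical_in (\<lambda>w. m + w^2) (mob a b c d) {w. c * w + d \<noteq> 0} c'"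
  shows "\<exists>gam' del'. del'^2 + m * gam'^2 = 1 \<and>
         (\<forall>w. c * w + d \<noteq> 0 \<longrightarrow> gam' * w + del' \<noteq> 0 \<and>
              mob a b c d w = mob del' (- gam' * m) gam' del' w)"
proof -
  define Dl where "Dl = a * d - b * c"
  have P: "Dl * (m + w^2) - c' * (c * w + d)^2 - (a * w + b)^2 = 0" if w: "c * w + d \<noteq> 0" for w
  proof -
    from can w obtain dd where dd: "(mob a b c d has_field_derivative dd) (at w)"
        and eq: "(m + w^2) * dd = c' + (mob a b c d w)^2"
      unfolding canonical_in_def reads_as_def by auto
    have "dd = Dl / (c * w + d)^2" using DERIV_unique[OF dd mob_deriv[OF w]] Dl_def by simp
    then have "(m + w^2) * (Dl / (c * w + d)^2) = c' + ((a * w + b) / (c * w + d))^2"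
      using eq by (simp add: mob_def)
    then have "(m + w^2) * Dl = c' * (c * w + d)^2 + (a * w + b)^2"
      using l1[OF w] by blast
    then show ?thesis by (simp add: algebra_simps)
  qed
  define w0 where "w0 = (if c = 0 then 0 else - d / c)"
  have "c * (w0 + t) + d \<noteq> 0" if "t \<in> {1, -1, 2}" for t :: complex
  proof (cases "c = 0")
    case True
    then have "d \<noteq> 0" using D by auto
    then show ?thesis using True by simp
  next
    case False
    then have "c * (w0 + t) + d = c * t" by (simp add: w0_def field_simps)
    then show ?thesis using that False by auto
  qed
  then have "(Dl - c' * c^2 - a^2) * (w0 + t)^2 + (- 2 * (c' * c * d + a * b)) * (w0 + t)
     + (Dl * m - c' * d^2 - b^2) = 0" if "t \<in> {1, -1, 2}" for t
  proof -
    have "(Dl - c' * c^2 - a^2) * (w0 + t)^2 + (- 2 * (c' * c * d + a * b)) * (w0 + t)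
     + (Dl * m - c' * d^2 - b^2) = Dl * (m + (w0 + t)^2) - c' * (c * (w0 + t) + d)^2 - (a * (w0 + t) + b)^2"
      by (simp add: power2_eq_square algebra_simps)
    then show ?thesis using P[of "w0 + t"] \<open>\<And>t. t \<in> {1, -1, 2} \<Longrightarrow> c * (w0 + t) + d \<noteq> 0\<close> that by simp
  qed
  note qz = quad_zero[OF this]
  have cA: "Dl = c' * c^2 + a^2" using conjunct1[OF qz] by (simp add: algebra_simps)
  have "- 2 * (c' * c * d + a * b) = 0" using qz by blast
  then have cB: "c' * c * d + a * b = 0" by (metis mult_eq_0_iff zero_neq_numeral neg_equal_0_iff_equal)
  have cC: "Dl * m = c' * d^2 + b^2" using conjunct2[OF conjunct2[OF qz]] by (simp add: algebra_simps)
  have "Dl * (d - a) = 0"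
  proof -
    have "Dl * (d - a) = (Dl - a^2) * d + a * b * c - a * (Dl - (a * d - b * c))"
      by (simp add: power2_eq_square algebra_simps)
    also have "\<dots> = c * (c' * c * d + a * b)" using cA Dl_def by (simp add: power2_eq_square algebra_simps)
    finally show ?thesis using cB by simp
  qed
  then have ad: "a = d" using D Dl_def by simp
  have bc: "b = - c' * c"
  proof (cases "c = 0")
    case True
    then have "a \<noteq> 0" using D ad by auto
    then show ?thesis using cB True by simp
  next
    case False
    have "c * (b + c' * c) = 0" using cA ad Dl_def by (simp add: power2_eq_square algebra_simps)
    then have "b + c' * c = 0" using False by simp
    then have "b = - (c' * c)" by (rule add_eq_0_iff2[THEN iffD1])
    then show ?thesis by simp
  qed
  have "Dl * m = c' * Dl"
  proof -
    have "Dl * m = c' * (d^2 + c' * c^2)" using cC bc by (simp add: power2_eq_square algebra_simps)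
    also have "\<dots> = c' * Dl" using cA ad by (simp add: algebra_simps)
    finally show ?thesis .
  qed
  then have cm: "c' = m" using D Dl_def by simp
  define s where "s = csqrt Dl"
  have s2: "s^2 = Dl" unfolding s_def by simp
  have s0: "s \<noteq> 0" using s2 D Dl_def by auto
  show ?thesis
  proof (intro exI conjI allI impI)
    show "(d / s)^2 + m * (c / s)^2 = 1"
    proof -
      have ss: "s^2 = d^2 + m * c^2" using s2 cA ad cm by (simp add: algebra_simps)
      have "(d / s)^2 + m * (c / s)^2 = (d^2 + m * c^2) / s^2"
        by (simp add: power_divide add_divide_distrib)
      then show ?thesis using ss s0 by (metis divide_self power_not_zero)
    qed
    fix w assume w: "c * w + d \<noteq> 0"
    show "c / s * w + d / s \<noteq> 0" using w s0 by (simp add: field_simps)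
    show "mob a b c d w = mob (d / s) (- (c / s) * m) (c / s) (d / s) w"
    proof -
      have n1: "d / s * w + - (c / s) * m = (d * w - c * m) / s" by (simp add: diff_divide_distrib)
      have n2: "c / s * w + d / s = (c * w + d) / s" by (simp add: add_divide_distrib)
      have "mob (d / s) (- (c / s) * m) (c / s) (d / s) w = (d * w - c * m) / (c * w + d)"
        unfolding mob_def n1 n2 using s0 by simp
      moreover have "mob a b c d w = (d * w - c * m) / (c * w + d)"
        unfolding mob_def using ad bc cm by simp
      ultimately show ?thesis by simp
    qed
  qed
qed

lemma pos_basic:
  fixes Q th v1 v2 :: real
  assumes Q: "Q > 0"
  defines "s \<equiv> sqrt Q"
  defines "E \<equiv> exp (2 * \<i> * of_real s * exp (- \<i> * of_real th) * ((of_real v1 + \<i> * of_real v2) / 2))"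
  defines "K \<equiv> \<i> * of_real s * exp (- \<i> * of_real th) / 2"
  defines "ea \<equiv> exp (- (s * h2 th v1 v2))"
  defines "cb \<equiv> cos (s * h1 th v1 v2)"
  defines "sb \<equiv> sin (s * h1 th v1 v2)"
  shows "E = of_real ea * (of_real cb + \<i> * of_real sb)"
    and "K = of_real (s * sin th / 2) + \<i> * of_real (s * cos th / 2)"
proof -
  have e: "exp (- \<i> * of_real th) = of_real (cos th) - \<i> * of_real (sin th)"
    by (simp add: complex_eq_iff Re_exp Im_exp)
  have arg: "2 * \<i> * of_real s * exp (- \<i> * of_real th) * ((of_real v1 + \<i> * of_real v2) / 2)
      = of_real (- (s * h2 th v1 v2)) + \<i> * of_real (s * h1 th v1 v2)"
    unfolding e by (simp add: complex_eq_iff h1_def h2_def algebra_simps)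
  show "E = of_real ea * (of_real cb + \<i> * of_real sb)"
    unfolding E_def arg ea_def cb_def sb_def
    by (simp add: complex_eq_iff Re_exp Im_exp)
  show "K = of_real (s * sin th / 2) + \<i> * of_real (s * cos th / 2)"
    unfolding K_def e by (simp add: complex_eq_iff algebra_simps)
qed

lemma pos_alg:
  fixes s st ct ea cb sb sha cha :: real and E K :: complex
  assumes hE: "E = of_real ea * (of_real cb + \<i> * of_real sb)"
    and hK: "K = of_real (s * st / 2) + \<i> * of_real (s * ct / 2)"
    and cs1: "cb^2 + sb^2 = 1" and cs2: "st^2 + ct^2 = 1"
    and ok: "1 - E \<noteq> 0" and s0: "s > 0" and ea0: "ea > 0"
    and ch: "2 * ea * cha = 1 + ea^2" and sh: "2 * ea * sha = 1 - ea^2"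
  defines "w \<equiv> K * (1 + E) / (1 - E)"
  defines "M \<equiv> w^2 - K^2"
  shows "of_real (2 * cmod M * ((cha - cb) / s^2)) = (1::complex)"
    and "of_real (2 * cmod M * ((cha + cb) / 4)) = w * cnj w"
    and "of_real (2 * cmod M * ((st * sha - ct * sb) / s)) = w + cnj w"
    and "of_real (2 * cmod M * (- (ct * sha + st * sb) / s)) = \<i> * (w - cnj w)"
proof -
  define X where "X = 1 - 2 * ea * cb + ea^2"
  have cE: "cnj E = of_real ea * (of_real cb - \<i> * of_real sb)" using hE by simp
  have cK: "cnj K = of_real (s * st / 2) - \<i> * of_real (s * ct / 2)" using hK by simp
  have EE: "E * cnj E = of_real (ea^2)"
  proof -
    have "E * cnj E = of_real (ea^2 * (cb^2 + sb^2))"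
      unfolding hE cE by (simp add: complex_eq_iff power2_eq_square algebra_simps)
    then show ?thesis using cs1 by simp
  qed
  have KK: "K * cnj K = of_real (s^2 / 4)"
  proof -
    have "K * cnj K = of_real (s^2 / 4 * (st^2 + ct^2))"
      unfolding hK cK by (simp add: complex_eq_iff power2_eq_square algebra_simps)
    then show ?thesis using cs2 by simp
  qed
  have EpE: "E + cnj E = of_real (2 * ea * cb)" unfolding hE cE by (simp add: complex_eq_iff)
  have EmE: "E - cnj E = \<i> * of_real (2 * ea * sb)" unfolding hE cE by (simp add: complex_eq_iff)
  have KpK: "K + cnj K = of_real (s * st)" unfolding hK cK by (simp add: complex_eq_iff)
  have KmK: "K - cnj K = \<i> * of_real (s * ct)" unfolding hK cK by (simp add: complex_eq_iff)
  have hX: "(1 - E) * (1 - cnj E) = of_real X"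
  proof -
    have "(1 - E) * (1 - cnj E) = 1 - (E + cnj E) + E * cnj E" by (simp add: algebra_simps)
    then show ?thesis unfolding EpE EE X_def by simp
  qed
  have hP: "(1 + E) * (1 + cnj E) = of_real (1 + 2 * ea * cb + ea^2)"
  proof -
    have "(1 + E) * (1 + cnj E) = 1 + (E + cnj E) + E * cnj E" by (simp add: algebra_simps)
    then show ?thesis unfolding EpE EE by simp
  qed
  have ok': "1 - cnj E \<noteq> 0" using ok by (metis complex_cnj_cnj complex_cnj_one complex_cnj_diff complex_cnj_zero)
  have X0: "X \<noteq> 0" using hX ok ok' by (metis mult_eq_0_iff of_real_eq_0_iff)
  have nE: "cmod E = ea"
  proof -
    have "of_real ((cmod E)^2) = (of_real (ea^2) :: complex)" using EE complex_norm_square by metis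
    then have "(cmod E)^2 = ea^2" using of_real_eq_iff by blast
    then show ?thesis using ea0 by (simp add: power2_eq_iff_nonneg)
  qed
  have nK: "cmod K = s / 2"
  proof -
    have "of_real ((cmod K)^2) = (of_real (s^2/4) :: complex)" using KK complex_norm_square by metis
    then have "(cmod K)^2 = s^2/4" by (simp only: of_real_eq_iff)
    then have "(cmod K)^2 = (s/2)^2" by (simp add: power_divide)
    then show ?thesis using s0 by (simp add: power2_eq_iff_nonneg)
  qed
  have n1E: "(cmod (1 - E))^2 = X"
  proof -
    have "of_real ((cmod (1 - E))^2) = (of_real X :: complex)" using hX complex_norm_square
      by (metis complex_cnj_diff complex_cnj_one)
    then show ?thesis using of_real_eq_iff by blast
  qed
  have Mf: "M = K^2 * (4 * E) / (1 - E)^2"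
  proof -
    have "(K * (1 + E) / (1 - E))^2 * (1 - E)^2 = (K * (1 + E))^2"
      using ok by (simp add: power_divide)
    then have "M * (1 - E)^2 = (K * (1 + E))^2 - K^2 * (1 - E)^2"
      unfolding M_def w_def by (simp add: left_diff_distrib)
    also have "\<dots> = K^2 * (4 * E)" by (simp add: power2_eq_square algebra_simps)
    finally have "M * (1 - E)^2 = K^2 * (4 * E)" .
    then show ?thesis using ok by (simp add: eq_divide_eq)
  qed
  have nM: "cmod M = s^2 * ea / X"
  proof -
    have "cmod M = (cmod K)^2 * (4 * cmod E) / (cmod (1 - E))^2"
      unfolding Mf by (simp add: norm_divide norm_mult norm_power)
    also have "\<dots> = (s/2)^2 * (4 * ea) / X" unfolding nE nK n1E by simp
    also have "\<dots> = s^2 * ea / X" by (simp add: power_divide)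
    finally show ?thesis .
  qed
  show "of_real (2 * cmod M * ((cha - cb) / s^2)) = (1::complex)"
  proof -
    have "2 * cmod M * ((cha - cb) / s^2) = (2 * ea * cha - 2 * ea * cb) / X"
      unfolding nM using s0 X0 by (simp add: field_simps)
    also have "\<dots> = 1" unfolding ch X_def using X0 X_def by simp
    finally show ?thesis by (simp only: of_real_1)
  qed
  show "of_real (2 * cmod M * ((cha + cb) / 4)) = w * cnj w"
  proof -
    have "w * cnj w = (K * cnj K) * ((1 + E) * (1 + cnj E)) / ((1 - E) * (1 - cnj E))"
      unfolding w_def by (simp add: field_simps)
    also have "\<dots> = of_real (s^2 / 4 * (1 + 2 * ea * cb + ea^2) / X)"
      unfolding KK hP hX by simp
    also have "s^2 / 4 * (1 + 2 * ea * cb + ea^2) / X = 2 * cmod M * ((cha + cb) / 4)"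
    proof -
      have h: "1 + 2 * ea * cb + ea^2 = 2 * ea * cha + 2 * ea * cb" using ch by simp
      show ?thesis unfolding nM h using X0 by (simp add: field_simps)
    qed
    finally show ?thesis by (rule sym)
  qed
  show "of_real (2 * cmod M * ((st * sha - ct * sb) / s)) = w + cnj w"
  proof -
    have "w + cnj w = ((K + cnj K) * (1 - E * cnj E) + (K - cnj K) * (E - cnj E)) / ((1 - E) * (1 - cnj E))"
      unfolding w_def using ok ok' by (simp add: field_simps)
    also have "\<dots> = of_real ((s * st * (1 - ea^2) - s * ct * (2 * ea * sb)) / X)"
      unfolding KpK KmK EE EmE hX by (simp add: algebra_simps)
    also have "(s * st * (1 - ea^2) - s * ct * (2 * ea * sb)) / X = 2 * cmod M * ((st * sha - ct * sb) / s)"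
    proof -
      have h: "1 - ea^2 = 2 * ea * sha" using sh by simp
      show ?thesis unfolding nM h using X0 s0 by (simp add: field_simps power2_eq_square)
    qed
    finally show ?thesis by (rule sym)
  qed
  show "of_real (2 * cmod M * (- (ct * sha + st * sb) / s)) = \<i> * (w - cnj w)"
  proof -
    have "\<i> * (w - cnj w) = \<i> * ((K - cnj K) * (1 - E * cnj E) + (K + cnj K) * (E - cnj E)) / ((1 - E) * (1 - cnj E))"
      unfolding w_def using ok ok' by (simp add: field_simps)
    also have "\<dots> = of_real (- (s * ct * (1 - ea^2) + s * st * (2 * ea * sb)) / X)"
      unfolding KpK KmK EE EmE hX by (simp add: algebra_simps)
    also have "- (s * ct * (1 - ea^2) + s * st * (2 * ea * sb)) / X = 2 * cmod M * (- (ct * sha + st * sb) / s)"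
    proof -
      have h: "1 - ea^2 = 2 * ea * sha" using sh by simp
      show ?thesis unfolding nM h using X0 s0 by (simp add: field_simps power2_eq_square)
    qed
    finally show ?thesis by (rule sym)
  qed
qed

lemma zero_alg:
  fixes v1 v2 :: real
  defines "z \<equiv> (of_real v1 + \<i> * of_real v2) / 2"
  assumes z0: "z \<noteq> 0"
  defines "w \<equiv> - 1 / (2 * z)"
  defines "M \<equiv> w^2"
  shows "of_real (2 * cmod M * ((v1^2 + v2^2) / 2)) = (1::complex)"
    and "of_real (2 * cmod M * (1 / 2)) = w * cnj w"
    and "of_real (2 * cmod M * (- v1)) = w + cnj w"
    and "of_real (2 * cmod M * (- v2)) = \<i> * (w - cnj w)"
proof -
  define r where "r = v1^2 + v2^2"
  have zz: "z * cnj z = of_real (r / 4)" unfolding z_def r_def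
    by (simp add: complex_eq_iff power2_eq_square)
  have r0: "r \<noteq> 0" using zz z0 by (metis complex_cnj_zero_iff divide_eq_0_iff mult_eq_0_iff of_real_0 of_real_eq_iff zero_neq_numeral)
  have cz0: "cnj z \<noteq> 0" using z0 by simp
  have nz: "(cmod z)^2 = r / 4"
  proof -
    have "of_real ((cmod z)^2) = (of_real (r / 4) :: complex)" using zz complex_norm_square by metis
    then show ?thesis by (simp only: of_real_eq_iff)
  qed
  have nM: "cmod M = 1 / r"
  proof -
    have "cmod M = 1 / (4 * (cmod z)^2)" unfolding M_def w_def
      by (simp add: norm_divide norm_mult norm_power power_divide)
    then show ?thesis unfolding nz by simp
  qed
  have zp: "z + cnj z = of_real v1" unfolding z_def by (simp add: complex_eq_iff)
  have zm: "z - cnj z = \<i> * of_real v2" unfolding z_def by (simp add: complex_eq_iff)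
  have ww: "w * cnj w = 1 / (4 * (z * cnj z))" unfolding w_def by (simp add: field_simps)
  have wp: "w + cnj w = - (z + cnj z) / (2 * (z * cnj z))" unfolding w_def using z0 cz0
    by (simp add: field_simps)
  have wm: "w - cnj w = (z - cnj z) / (2 * (z * cnj z))" unfolding w_def using z0 cz0
    by (simp add: field_simps)
  show "of_real (2 * cmod M * ((v1^2 + v2^2) / 2)) = (1::complex)"
    unfolding nM r_def[symmetric] using r0 by simp
  show "of_real (2 * cmod M * (1 / 2)) = w * cnj w"
    unfolding nM ww zz using r0 by simp
  show "of_real (2 * cmod M * (- v1)) = w + cnj w"
    unfolding nM wp zz zp using r0 by (simp add: field_simps)
  show "of_real (2 * cmod M * (- v2)) = \<i> * (w - cnj w)"
    unfolding nM wm zz zm using r0 by (simp add: field_simps)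
qed

lemma omega_facts:
  fixes Q th v1 v2 :: real and m :: complex
  assumes Q: "Q \<ge> 0" and hm: "4 * m = of_real Q * exp (- 2 * \<i> * of_real th)"
    and ok: "zeta_ok Q th ((of_real v1 + \<i> * of_real v2) / 2)"
  defines "z \<equiv> (of_real v1 + \<i> * of_real v2) / 2"
  defines "w \<equiv> omega_of_zeta Q th z"
  defines "M \<equiv> m + w^2"
  shows "(omega_of_zeta Q th has_field_derivative 2 * M) (at z)"
    and "of_real (2 * cmod M * fminus Q th v1 v2) = (1::complex)"
    and "of_real (2 * cmod M * fplus Q th v1 v2) = w * cnj w"
    and "of_real (2 * cmod M * f2 Q th v1 v2) = w + cnj w"
    and "of_real (2 * cmod M * f3 Q th v1 v2) = \<i> * (w - cnj w)"
proof -
  have "((omega_of_zeta Q th has_field_derivative 2 * M) (at z)) \<and>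
    of_real (2 * cmod M * fminus Q th v1 v2) = (1::complex) \<and>
    of_real (2 * cmod M * fplus Q th v1 v2) = w * cnj w \<and>
    of_real (2 * cmod M * f2 Q th v1 v2) = w + cnj w \<and>
    of_real (2 * cmod M * f3 Q th v1 v2) = \<i> * (w - cnj w)"
  proof (cases "Q > 0")
    case True
    define s where "s = sqrt Q"
    define e where "e = exp (- \<i> * of_real th)"
    define c where "c = 2 * \<i> * of_real s * e"
    define K where "K = \<i> * of_real s * e / 2"
    define E where "E = exp (c * z)"
    have s0: "s > 0" using True s_def by simp
    have ss: "s^2 = Q" using True s_def by simp
    have E1: "1 - E \<noteq> 0" using ok True unfolding zeta_ok_def E_def c_def e_def s_def z_def by simp
    have om: "omega_of_zeta Q th = (\<lambda>y. K * (1 + exp (c * y)) / (1 - exp (c * y)))"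
      using True unfolding omega_of_zeta_def K_def c_def e_def s_def by (auto simp: mult.assoc)
    have wE: "w = K * (1 + E) / (1 - E)" unfolding w_def om E_def by simp
    have e2: "e^2 = exp (- 2 * \<i> * of_real th)"
    proof -
      have "- 2 * \<i> * of_real th = - \<i> * of_real th + - \<i> * of_real th" by simp
      then show ?thesis unfolding e_def by (simp only: exp_add power2_eq_square)
    qed
    have mK: "m = -(K^2)"
    proof -
      have "4 * m = of_real (s^2) * e^2" using hm e2 ss by simp
      then show ?thesis unfolding K_def by (simp add: power2_eq_square field_simps)
    qed
    have MwK: "M = w^2 - K^2" unfolding M_def mK by simp
    have D: "(omega_of_zeta Q th has_field_derivative 2 * M) (at z)"
    proof -
      have d1: "((\<lambda>y. K * (1 + exp (c * y)) / (1 - exp (c * y))) has_field_derivative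
          (K * (c * E) * (1 - E) + K * (1 + E) * (c * E)) / (1 - E)^2) (at z)"
        using E1 unfolding E_def
        by (auto intro!: derivative_eq_intros simp: power2_eq_square)
      have Kc: "K * c = 4 * K^2" unfolding K_def c_def by (simp add: power2_eq_square)
      have "M * (1 - E)^2 = K^2 * (4 * E)"
      proof -
        have "(K * (1 + E) / (1 - E))^2 * (1 - E)^2 = (K * (1 + E))^2"
          using E1 by (simp add: power_divide)
        then have "M * (1 - E)^2 = (K * (1 + E))^2 - K^2 * (1 - E)^2"
          unfolding MwK wE by (simp add: left_diff_distrib)
        also have "\<dots> = K^2 * (4 * E)" by (simp add: power2_eq_square algebra_simps)
        finally show ?thesis .
      qed
      then have Mf: "M = K^2 * (4 * E) / (1 - E)^2" using E1 by (simp add: eq_divide_eq)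
      have "K * (c * E) * (1 - E) + K * (1 + E) * (c * E) = 2 * (K * c) * E"
        by (simp add: algebra_simps)
      then have "(K * (c * E) * (1 - E) + K * (1 + E) * (c * E)) / (1 - E)^2 = 2 * M"
        unfolding Mf Kc by simp
      then show ?thesis using d1 om by simp
    qed
    define a where "a = s * h2 th v1 v2"
    define ea where "ea = exp (- a)"
    have ea0: "ea > 0" unfolding ea_def by simp
    have eea: "ea * exp a = 1" unfolding ea_def by (simp add: exp_minus)
    have c1: "cosh a = (exp a + ea) / 2" unfolding cosh_def ea_def by simp
    have s1: "sinh a = (exp a - ea) / 2" unfolding sinh_def ea_def by simp
    have "2 * ea * cosh a = ea * exp a + ea^2" unfolding c1 by (simp add: power2_eq_square field_simps)
    then have ch: "2 * ea * cosh a = 1 + ea^2" unfolding eea .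
    have "2 * ea * sinh a = ea * exp a - ea^2" unfolding s1 by (simp add: power2_eq_square field_simps)
    then have sh: "2 * ea * sinh a = 1 - ea^2" unfolding eea .
    note pb1 = pos_basic(1)[of Q th v1 v2, OF True, folded s_def]
    note pb2 = pos_basic(2)[of Q th, OF True, folded s_def]
    have hE: "E = of_real ea * (of_real (cos (s * h1 th v1 v2)) + \<i> * of_real (sin (s * h1 th v1 v2)))"
      using pb1 unfolding E_def c_def e_def z_def ea_def a_def by simp
    have hK: "K = of_real (s * sin th / 2) + \<i> * of_real (s * cos th / 2)"
      using pb2 unfolding K_def e_def by simp
    note pa = pos_alg[OF hE hK sin_cos_squared_add2 sin_cos_squared_add E1 s0 ea0 ch sh, folded wE MwK]
    have fm: "fminus Q th v1 v2 = (cosh a - cos (s * h1 th v1 v2)) / s^2"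
      unfolding fminus_def a_def ss using True s_def by simp
    have fp: "fplus Q th v1 v2 = (cosh a + cos (s * h1 th v1 v2)) / 4"
      unfolding fplus_def a_def using True s_def by simp
    have ff2: "f2 Q th v1 v2 = (sin th * sinh a - cos th * sin (s * h1 th v1 v2)) / s"
      unfolding f2_def a_def using True s_def by simp
    have ff3: "f3 Q th v1 v2 = - (cos th * sinh a + sin th * sin (s * h1 th v1 v2)) / s"
      unfolding f3_def a_def using True s_def by simp
    show ?thesis using D pa unfolding fm fp ff2 ff3 by simp
  next
    case False
    then have Q0: "Q = 0" using Q by simp
    have m0: "m = 0" using hm Q0 by simp
    have z0: "z \<noteq> 0" using ok Q0 unfolding zeta_ok_def z_def by simp
    have om: "omega_of_zeta Q th = (\<lambda>y. - 1 / (2 * y))" using Q0 unfolding omega_of_zeta_def by auto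
    have D: "(omega_of_zeta Q th has_field_derivative 2 * M) (at z)"
    proof -
      have "((\<lambda>y. - 1 / (2 * y)) has_field_derivative 1 / (2 * z^2)) (at z)"
        using z0 by (auto intro!: derivative_eq_intros simp: power2_eq_square field_simps)
      moreover have "1 / (2 * z^2) = 2 * M" unfolding M_def m0 w_def om using z0
        by (simp add: power2_eq_square field_simps)
      ultimately show ?thesis unfolding om by simp
    qed
    have wz: "w = - 1 / (2 * z)" unfolding w_def om by simp
    note za = zero_alg[of v1 v2, folded z_def, OF z0, folded wz]
    have MM: "M = w^2" unfolding M_def m0 by simp
    show ?thesis using D za Q0 unfolding MM fminus_def fplus_def f2_def f3_def by simp
  qed
  then show "(omega_of_zeta Q th has_field_derivative 2 * M) (at z)"
    and "of_real (2 * cmod M * fminus Q th v1 v2) = (1::complex)"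
    and "of_real (2 * cmod M * fplus Q th v1 v2) = w * cnj w"
    and "of_real (2 * cmod M * f2 Q th v1 v2) = w + cnj w"
    and "of_real (2 * cmod M * f3 Q th v1 v2) = \<i> * (w - cnj w)" by auto
qed

lemma Omega_frac:
  fixes N p :: complex assumes p: "p \<noteq> 0"
  shows "Omega u0 u1 u2 u3 (N / p) * (p * cnj p) =
    of_real u0 * (p * cnj p + N * cnj N) + of_real u1 * (p * cnj p - N * cnj N)
    + of_real u2 * (N * cnj p + cnj N * p) + of_real u3 * \<i> * (N * cnj p - cnj N * p)"
proof -
  have cp: "cnj p \<noteq> 0" using p by simp
  show ?thesis unfolding Omega_def using p cp by (simp add: field_simps)
qed

lemma uprime:
  fixes alp bet gam del :: complex and u0 u1 u2 u3 :: real
  assumes that: "alp - gam * w \<noteq> 0"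
  defines "u' \<equiv> (\<lambda>i. \<Sum>j<4. Lam alp bet gam del i j * of_real ([u0, u1, u2, u3] ! j))"
  shows "Omega u0 u1 u2 u3 (mob del (- bet) (- gam) alp w) * ((alp - gam * w) * cnj (alp - gam * w))
    = u' 0 * (1 + w * cnj w) + u' 1 * (1 - w * cnj w) + u' 2 * (w + cnj w) + u' 3 * \<i> * (w - cnj w)"
proof -
  have m: "mob del (- bet) (- gam) alp w = (del * w - bet) / (alp - gam * w)"
    unfolding mob_def by (simp add: algebra_simps)
  have s4: "\<And>f :: nat \<Rightarrow> complex. (\<Sum>j<4. f j) = f 0 + f 1 + f 2 + f 3"
    by (simp add: eval_nat_numeral)
  show ?thesis unfolding m Omega_frac[OF that] u'_def s4
    by (simp add: Lam_def Nmat_def Let_def field_simps)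
qed

theorem theorem8p1:
  fixes mu0 mu1 mu2 gam del :: complex
  assumes norm: "del^2 * mu2 / 2 - gam * del * mu1 + gam^2 * mu0 = 1"
  defines "alp \<equiv> (del * mu2 - gam * mu1) / 2"
      and "bet \<equiv> del * mu1 / 2 - gam * mu0"
      and "mu0' \<equiv> (2 * mu0 * mu2 - mu1^2) / 4"
  shows
        "(alp * del - bet * gam \<noteq> 0 \<and>
     canonical_in (gckv mu0 mu1 mu2) (mob alp bet gam del) {z. gam * z + del \<noteq> 0} mu0') \<and>
        (\<forall>a b c d c'. a * d - b * c \<noteq> 0 \<longrightarrow>
       canonical_in (\<lambda>w. mu0' + w^2) (mob a b c d) {w. c * w + d \<noteq> 0} c' \<longrightarrow>
       (\<exists>gam' del'. del'^2 + mu0' * gam'^2 = 1 \<and>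
         (\<forall>w. c * w + d \<noteq> 0 \<longrightarrow> gam' * w + del' \<noteq> 0 \<and>
              mob a b c d w = mob del' (- gam' * mu0') gam' del' w))) \<and>
        (\<forall>Q th v1 v2. Q \<ge> 0 \<longrightarrow> 4 * mu0' = of_real Q * exp (- 2 * \<i> * of_real th) \<longrightarrow>
       (Q = 0 \<or> (0 \<le> th \<and> th < pi)) \<longrightarrow>
       zeta_ok Q th ((of_real v1 + \<i> * of_real v2) / 2) \<longrightarrow>
       alp - gam * omega_of_zeta Q th ((of_real v1 + \<i> * of_real v2) / 2) \<noteq> 0 \<longrightarrow>
       ((\<lambda>t. mob del (- bet) (- gam) alp (omega_of_zeta Q th ((of_real t + \<i> * of_real v2) / 2)))
          has_vector_derivative
          gckv mu0 mu1 mu2 (mob del (- bet) (- gam) alp (omega_of_zeta Q th ((of_real v1 + \<i> * of_real v2) / 2))))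
         (at v1) \<and>
       ((\<lambda>t. mob del (- bet) (- gam) alp (omega_of_zeta Q th ((of_real v1 + \<i> * of_real t) / 2)))
          has_vector_derivative
          gckv (\<i> * mu0) (\<i> * mu1) (\<i> * mu2) (mob del (- bet) (- gam) alp (omega_of_zeta Q th ((of_real v1 + \<i> * of_real v2) / 2))))
         (at v2)) \<and>
        (\<forall>Q th v1 v2 u0 u1 u2 u3 d1 d2. Q \<ge> 0 \<longrightarrow> 4 * mu0' = of_real Q * exp (- 2 * \<i> * of_real th) \<longrightarrow>
       (Q = 0 \<or> (0 \<le> th \<and> th < pi)) \<longrightarrow>
       (u0, u1, u2, u3) \<noteq> (0, 0, 0, 0) \<longrightarrow>
       zeta_ok Q th ((of_real v1 + \<i> * of_real v2) / 2) \<longrightarrow>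
       alp - gam * omega_of_zeta Q th ((of_real v1 + \<i> * of_real v2) / 2) \<noteq> 0 \<longrightarrow>
       Omega u0 u1 u2 u3 (mob del (- bet) (- gam) alp (omega_of_zeta Q th ((of_real v1 + \<i> * of_real v2) / 2))) \<noteq> 0 \<longrightarrow>
       ((\<lambda>t. xy_of_z (mob del (- bet) (- gam) alp (omega_of_zeta Q th ((of_real t + \<i> * of_real v2) / 2))))
          has_vector_derivative d1) (at v1) \<longrightarrow>
       ((\<lambda>t. xy_of_z (mob del (- bet) (- gam) alp (omega_of_zeta Q th ((of_real v1 + \<i> * of_real t) / 2))))
          has_vector_derivative d2) (at v2) \<longrightarrow>
       (let z = mob del (- bet) (- gam) alp (omega_of_zeta Q th ((of_real v1 + \<i> * of_real v2) / 2));
            Om = Omega u0 u1 u2 u3 z;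
            u = [u0, u1, u2, u3];
            u' = (\<lambda>i. \<Sum>j<4. Lam alp bet gam del i j * of_real (u ! j));
            D = (u' 0 - u' 1) * of_real (fplus Q th v1 v2) + (u' 0 + u' 1) * of_real (fminus Q th v1 v2)
                + u' 2 * of_real (f2 Q th v1 v2) + u' 3 * of_real (f3 Q th v1 v2)
        in of_real (d1 \<bullet> d1) / Om^2 = 1 / D^2 \<and>
           of_real (d2 \<bullet> d2) / Om^2 = 1 / D^2 \<and>
           of_real (d1 \<bullet> d2) / Om^2 = 0))"
proof -
  have det: "alp * del - bet * gam = 1"
  proof -
    have "alp * del - bet * gam = del^2 * mu2 / 2 - gam * del * mu1 + gam^2 * mu0"
      unfolding alp_def bet_def by (simp add: field_simps power2_eq_square)
    then show ?thesis using norm by simp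
  qed
  have det': "del * alp - (- bet) * (- gam) = 1" using det by (simp add: algebra_simps)
  have P1: "alp * del - bet * gam \<noteq> 0 \<and>
     canonical_in (gckv mu0 mu1 mu2) (mob alp bet gam del) {z. gam * z + del \<noteq> 0} mu0'"
  proof
    show "alp * del - bet * gam \<noteq> 0" using det by simp
    show "canonical_in (gckv mu0 mu1 mu2) (mob alp bet gam del) {z. gam * z + del \<noteq> 0} mu0'"
      unfolding canonical_in_def reads_as_def
    proof
      fix z assume "z \<in> {z. gam * z + del \<noteq> 0}"
      then have q: "gam * z + del \<noteq> 0" by simp
      have "(mob alp bet gam del has_field_derivative 1 / (gam * z + del)^2) (at z)"
        using mob_deriv[OF q, of alp bet] det by simp
      moreover have "gckv mu0 mu1 mu2 z * (1 / (gam * z + del)^2) = mu0' + (mob alp bet gam del z)^2"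
        using part1[OF norm q] unfolding alp_def bet_def mu0'_def .
      ultimately show "\<exists>d. (mob alp bet gam del has_field_derivative d) (at z) \<and>
          gckv mu0 mu1 mu2 z * d = mu0' + (mob alp bet gam del z)^2" by blast
    qed
  qed
  have P2: "\<forall>a b c d c'. a * d - b * c \<noteq> 0 \<longrightarrow>
       canonical_in (\<lambda>w. mu0' + w^2) (mob a b c d) {w. c * w + d \<noteq> 0} c' \<longrightarrow>
       (\<exists>gam' del'. del'^2 + mu0' * gam'^2 = 1 \<and>
         (\<forall>w. c * w + d \<noteq> 0 \<longrightarrow> gam' * w + del' \<noteq> 0 \<and>
              mob a b c d w = mob del' (- gam' * mu0') gam' del' w))"
    using part2 by blast
  have Vinv: "gckv mu0 mu1 mu2 (mob del (- bet) (- gam) alp w) = (mu0' + w^2) / (alp - gam * w)^2"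
    if "alp - gam * w \<noteq> 0" for w
    using gckv_mob_inv[OF norm, of w] that unfolding alp_def bet_def mu0'_def by simp
  have chain: "((\<lambda>t. mob del (- bet) (- gam) alp (omega_of_zeta Q th (f t))) has_vector_derivative
      f' * (2 * (mu0' + (omega_of_zeta Q th (f x))^2)) / (alp - gam * omega_of_zeta Q th (f x))^2) (at x)"
    if hf: "(f has_vector_derivative f') (at x)"
      and hw: "(omega_of_zeta Q th has_field_derivative 2 * (mu0' + (omega_of_zeta Q th (f x))^2)) (at (f x))"
      and p: "alp - gam * omega_of_zeta Q th (f x) \<noteq> 0"
    for f :: "real \<Rightarrow> complex" and f' x Q th
  proof -
    have p': "(- gam) * (omega_of_zeta Q th (f x)) + alp \<noteq> 0" using p by (simp add: algebra_simps)
    have p'': "(- gam) * ((omega_of_zeta Q th \<circ> f) x) + alp \<noteq> 0" using p' by simp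
    note c1 = field_vector_diff_chain_at[OF hf hw]
    note c2 = field_vector_diff_chain_at[OF c1 mob_deriv[where a=del and b="-bet" and c="-gam" and d=alp, OF p'']]
    have e: "f' * (2 * (mu0' + (omega_of_zeta Q th (f x))^2)) *
        ((del * alp - (- bet) * (- gam)) / ((- gam) * ((omega_of_zeta Q th \<circ> f) x) + alp)^2)
      = f' * (2 * (mu0' + (omega_of_zeta Q th (f x))^2)) / (alp - gam * omega_of_zeta Q th (f x))^2"
      unfolding det' by (simp add: algebra_simps add_divide_distrib)
    show ?thesis using c2 unfolding e by (simp add: o_def)
  qed
  have D12: "((\<lambda>t. mob del (- bet) (- gam) alp (omega_of_zeta Q th ((of_real t + \<i> * of_real v2) / 2)))
          has_vector_derivative
          gckv mu0 mu1 mu2 (mob del (- bet) (- gam) alp (omega_of_zeta Q th ((of_real v1 + \<i> * of_real v2) / 2))))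
         (at v1) \<and>
       ((\<lambda>t. mob del (- bet) (- gam) alp (omega_of_zeta Q th ((of_real v1 + \<i> * of_real t) / 2)))
          has_vector_derivative
          gckv (\<i> * mu0) (\<i> * mu1) (\<i> * mu2) (mob del (- bet) (- gam) alp (omega_of_zeta Q th ((of_real v1 + \<i> * of_real v2) / 2))))
         (at v2)"
    if Q: "Q \<ge> 0" and hm: "4 * mu0' = of_real Q * exp (- 2 * \<i> * of_real th)"
      and ok: "zeta_ok Q th ((of_real v1 + \<i> * of_real v2) / 2)"
      and p: "alp - gam * omega_of_zeta Q th ((of_real v1 + \<i> * of_real v2) / 2) \<noteq> 0"
    for Q th v1 v2 :: real
  proof -
    define w where "w = omega_of_zeta Q th ((of_real v1 + \<i> * of_real v2) / 2)"
    note hw = omega_facts(1)[OF Q hm ok]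
    have pa: "((\<lambda>t. (of_real t + \<i> * of_real v2) / 2) has_vector_derivative 1 / 2) (at v1)"
      by (auto intro!: derivative_eq_intros)
    have pb: "((\<lambda>t. (of_real v1 + \<i> * of_real t) / 2) has_vector_derivative \<i> / 2) (at v2)"
      by (auto intro!: derivative_eq_intros)
    note ca = chain[where f="\<lambda>t. (of_real t + \<i> * of_real v2) / 2" and x=v1, OF pa hw p]
    note cb = chain[where f="\<lambda>t. (of_real v1 + \<i> * of_real t) / 2" and x=v2, OF pb hw p]
    have V: "gckv mu0 mu1 mu2 (mob del (- bet) (- gam) alp w) = (mu0' + w^2) / (alp - gam * w)^2"
      using Vinv p unfolding w_def by blast
    have Vi: "gckv (\<i> * mu0) (\<i> * mu1) (\<i> * mu2) z = \<i> * gckv mu0 mu1 mu2 z" for z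
      unfolding gckv_def by (simp add: algebra_simps)
    have e1: "1 / 2 * (2 * (mu0' + w^2)) / (alp - gam * w)^2 = (mu0' + w^2) / (alp - gam * w)^2"
      by (simp only: mult.assoc[symmetric]) simp
    have e2: "\<i> / 2 * (2 * (mu0' + w^2)) / (alp - gam * w)^2 = \<i> * ((mu0' + w^2) / (alp - gam * w)^2)"
      by (simp only: mult.assoc[symmetric]) simp
    show ?thesis using ca cb unfolding Vi w_def[symmetric] V e1 e2 by simp
  qed
  have P4: "of_real (d1 \<bullet> d1) / Om^2 = 1 / Dd^2 \<and> of_real (d2 \<bullet> d2) / Om^2 = 1 / Dd^2 \<and> of_real (d1 \<bullet> d2) / Om^2 = 0"
    if Q: "Q \<ge> 0" and hm: "4 * mu0' = of_real Q * exp (- 2 * \<i> * of_real th)"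
      and ok: "zeta_ok Q th ((of_real v1 + \<i> * of_real v2) / 2)"
      and p: "alp - gam * omega_of_zeta Q th ((of_real v1 + \<i> * of_real v2) / 2) \<noteq> 0"
      and Om0: "Omega u0 u1 u2 u3 (mob del (- bet) (- gam) alp (omega_of_zeta Q th ((of_real v1 + \<i> * of_real v2) / 2))) \<noteq> 0"
      and hd1: "((\<lambda>t. xy_of_z (mob del (- bet) (- gam) alp (omega_of_zeta Q th ((of_real t + \<i> * of_real v2) / 2))))
          has_vector_derivative d1) (at v1)"
      and hd2: "((\<lambda>t. xy_of_z (mob del (- bet) (- gam) alp (omega_of_zeta Q th ((of_real v1 + \<i> * of_real t) / 2))))
          has_vector_derivative d2) (at v2)"
      and Om_def: "Om = Omega u0 u1 u2 u3 (mob del (- bet) (- gam) alp (omega_of_zeta Q th ((of_real v1 + \<i> * of_real v2) / 2)))"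
      and up_def: "up = (\<lambda>i. \<Sum>j<4. Lam alp bet gam del i j * of_real ([u0, u1, u2, u3] ! j))"
      and Dd_def: "Dd = (up 0 - up 1) * of_real (fplus Q th v1 v2) + (up 0 + up 1) * of_real (fminus Q th v1 v2)
                + up 2 * of_real (f2 Q th v1 v2) + up 3 * of_real (f3 Q th v1 v2)"
    for Q th v1 v2 u0 u1 u2 u3 :: real and d1 d2 Om up Dd
  proof -
    define w where "w = omega_of_zeta Q th ((of_real v1 + \<i> * of_real v2) / 2)"
    define z0 where "z0 = mob del (- bet) (- gam) alp w"
    define pp where "pp = alp - gam * w"
    define M where "M = mu0' + w^2"
    define V where "V = gckv mu0 mu1 mu2 z0"
    have pp0: "pp \<noteq> 0" using p unfolding pp_def w_def .
    have VM: "V = M / pp^2" unfolding V_def z0_def M_def pp_def using Vinv pp0 pp_def by blast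
    note dd = D12[OF Q hm ok p, folded w_def z0_def]
    have Vi: "gckv (\<i> * mu0) (\<i> * mu1) (\<i> * mu2) z = \<i> * gckv mu0 mu1 mu2 z" for z
      unfolding gckv_def by (simp add: algebra_simps)
    have x1: "((\<lambda>t. xy_of_z (mob del (- bet) (- gam) alp (omega_of_zeta Q th ((of_real t + \<i> * of_real v2) / 2))))
          has_vector_derivative 2 * cnj V) (at v1)"
      unfolding xy_of_z_def V_def
      by (intro has_vector_derivative_mult_right has_vector_derivative_cnj conjunct1[OF dd])
    have x2: "((\<lambda>t. xy_of_z (mob del (- bet) (- gam) alp (omega_of_zeta Q th ((of_real v1 + \<i> * of_real t) / 2))))
          has_vector_derivative 2 * cnj (\<i> * V)) (at v2)"
      unfolding xy_of_z_def V_def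
      by (intro has_vector_derivative_mult_right has_vector_derivative_cnj conjunct2[OF dd[unfolded Vi]])
    have d1e: "d1 = 2 * cnj V" using vector_derivative_unique_at[OF hd1 x1] .
    have d2e: "d2 = 2 * cnj (\<i> * V)" using vector_derivative_unique_at[OF hd2 x2] .
    have i11: "d1 \<bullet> d1 = 4 * (cmod V)^2" unfolding d1e power2_norm_eq_inner[symmetric]
      by (simp add: norm_mult power_mult_distrib)
    have i22: "d2 \<bullet> d2 = 4 * (cmod V)^2" unfolding d2e power2_norm_eq_inner[symmetric]
      by (simp add: norm_mult power_mult_distrib)
    have i12: "d1 \<bullet> d2 = 0" unfolding d1e d2e inner_complex_def by (simp add: algebra_simps)
    note of = omega_facts[OF Q hm ok, folded w_def M_def]
    have herm: "Om * (pp * cnj pp) = up 0 * (1 + w * cnj w) + up 1 * (1 - w * cnj w) + up 2 * (w + cnj w) + up 3 * \<i> * (w - cnj w)"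
      unfolding Om_def up_def pp_def w_def using uprime p by blast
    have herm2: "Om * (pp * cnj pp) = of_real (2 * cmod M) * Dd"
    proof -
      have "Om * (pp * cnj pp) = up 0 * (of_real (2 * cmod M * fminus Q th v1 v2) + of_real (2 * cmod M * fplus Q th v1 v2))
        + up 1 * (of_real (2 * cmod M * fminus Q th v1 v2) - of_real (2 * cmod M * fplus Q th v1 v2))
        + up 2 * of_real (2 * cmod M * f2 Q th v1 v2) + up 3 * of_real (2 * cmod M * f3 Q th v1 v2)"
        unfolding herm of(2-5) by (simp add: mult.assoc)
      also have "\<dots> = of_real (2 * cmod M) * Dd" unfolding Dd_def by (simp add: algebra_simps)
      finally show ?thesis .
    qed
    have ppn: "pp * cnj pp = of_real ((cmod pp)^2)" using complex_norm_square by metis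
    have ppn0: "cmod pp \<noteq> 0" using pp0 by simp
    have nV: "cmod V = cmod M / (cmod pp)^2" unfolding VM by (simp add: norm_divide norm_power)
    have OmV: "Om = of_real (2 * cmod V) * Dd"
    proof -
      have "Om = of_real (2 * cmod M) * Dd / of_real ((cmod pp)^2)"
        using herm2 ppn ppn0 by (simp add: eq_divide_eq)
      then show ?thesis unfolding nV by (simp add: field_simps)
    qed
    have Om0': "Om \<noteq> 0" using Om0 Om_def by simp
    then have V0: "cmod V \<noteq> 0" and D0: "Dd \<noteq> 0" using OmV by auto
    have Om2: "Om^2 = of_real (4 * (cmod V)^2) * Dd^2" unfolding OmV by (simp add: power_mult_distrib)
    have r: "of_real (4 * (cmod V)^2) / Om^2 = 1 / Dd^2" unfolding Om2 using V0 D0 by (simp add: field_simps)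
    show ?thesis unfolding i11 i22 i12 using r by simp
  qed
  show ?thesis
    apply (rule conjI[OF P1])
    apply (rule conjI[OF P2])
    apply (rule conjI)
     apply (intro allI impI)
     apply (rule D12; assumption)
    apply (intro allI impI)
    apply (unfold Let_def)
    apply (rule P4[OF _ _ _ _ _ _ _ refl refl refl]; assumption)
    done
qed

end
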